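(* Fix positive integers $n$, $k\le n$ and $h$, and an integer $t\ge 0$. Pick an exact pattern $\rho$ of length $k$ from $[n]$ uniformly at random (i.e., a uniformly random sequence of $k$ distinct elements of $[n]$). Then the probability that the set intersection $\rho\cap(\rho+h)$ has size at least $t$ and there exists a permutation $\pi\in S_n$ such that $\rho$ and $\rho+h$ are both exact patterns in $\pi$ is at most $$\frac{2^{2k-t}k^{k-t}}{k!}.$$
   Context: For a sequence $\sigma=(\sigma(1),\dots,\sigma(n))$ of distinct integers (e.g. a permutation $\pi\in S_n$ written in one-line notation), an exact pattern of $\sigma$ is a sequence $\rho=(\rho(1),\dots,\rho(k))$ of distinct integers such that there are indices $1\le i_1<\dots<i_k\le n$ with $\sigma(i_j)=\rho(j)$ for all $j$. An exact pattern of length $k$ from $[n]$ is any sequence of $k$ distinct elements of $[n]$. For a sequence $\rho$ and integer $h$, $\rho+h$ is the sequence $(\rho(1)+h,\dots,\rho(k)+h)$, and $\rho\cap(\rho+h)$ denotes the intersection of the underlying sets. *)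

theory Defs
  imports Complex_Main "HOL-Library.Sublist"
begin

definition exact_pattern :: "int list \<Rightarrow> int list \<Rightarrow> bool" where
  "exact_pattern \<rho> \<sigma> \<longleftrightarrow> distinct \<rho> \<and> subseq \<rho> \<sigma>"

definition perms :: "nat \<Rightarrow> int list set" where
  "perms n = {\<pi>. distinct \<pi> \<and> set \<pi> = {1..int n}}"

definition patterns :: "nat \<Rightarrow> nat \<Rightarrow> int list set" where
  "patterns n k = {\<rho>. length \<rho> = k \<and> distinct \<rho> \<and> set \<rho> \<subseteq> {1..int n}}"

definition shift :: "int list \<Rightarrow> int \<Rightarrow> int list" where
  "shift \<rho> h = map (\<lambda>x. x + h) \<rho>"

end

theory Submission
  imports Defs "HOL-Combinatorics.Multiset_Permutations"
begin

lemma filter_take_nth: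
  assumes "p < length xs" "P (xs!p)"
  shows "filter P xs ! length (filter P (take p xs)) = xs!p
    \<and> length (filter P (take p xs)) < length (filter P xs)"
proof -
  have "xs = take p xs @ xs!p # drop (Suc p) xs" using assms(1) by (rule id_take_nth_drop)
  then have "filter P xs = filter P (take p xs) @ xs!p # filter P (drop (Suc p) xs)"
    using assms(2) by (metis filter.simps(2) filter_append)
  then show ?thesis by (simp add: nth_append)
qed

lemma filter_nth_ex:
  "j < length (filter P xs) \<Longrightarrow> \<exists>q<length xs. P (xs!q) \<and> length (filter P (take q xs)) = j"
proof (induction xs arbitrary: j)
  case Nil then show ?case by simp
next
  case (Cons a xs)
  show ?case
  proof (cases "P a")
    case True
    show ?thesis
    proof (cases j)
      case 0 then show ?thesis using True by (intro exI[of _ 0]) auto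
    next
      case (Suc j')
      then obtain q where "q<length xs" "P (xs!q)" "length (filter P (take q xs)) = j'"
        using Cons True by auto
      then show ?thesis using True Suc by (intro exI[of _ "Suc q"]) auto
    qed
  next
    case False
    then obtain q where "q<length xs" "P (xs!q)" "length (filter P (take q xs)) = j"
      using Cons by auto
    then show ?thesis using False by (intro exI[of _ "Suc q"]) auto
  qed
qed

lemma count_take_eq:
  assumes "map P xs = map P ys"
  shows "length (filter P (take p xs)) = length (filter P (take p ys))"
proof -
  have "\<And>zs. length (filter P zs) = length (filter id (map P zs))"
    by (simp add: filter_map)
  then show ?thesis using assms by (metis take_map)
qed

lemma subseq_set_sub: "subseq xs ys \<Longrightarrow> set xs \<subseteq> set ys"
  by (induction rule: list_emb.induct) auto

lemma filter_subseq_distinct: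
  "subseq \<rho> \<pi> \<Longrightarrow> distinct \<pi> \<Longrightarrow> filter (\<lambda>x. x \<in> set \<rho>) \<pi> = \<rho>"
proof (induction rule: list_emb.induct)
  case (list_emb_Nil ys) then show ?case by simp
next
  case (list_emb_Cons xs ys y)
  then have "y \<notin> set xs" using subseq_set_sub by fastforce
  then show ?case using list_emb_Cons by simp
next
  case (list_emb_Cons2 x y xs ys)
  then have "filter (\<lambda>z. z \<in> set (x#xs)) ys = filter (\<lambda>z. z \<in> set xs) ys"
    by (intro filter_cong) auto
  then show ?case using list_emb_Cons2 by simp
qed

lemma determinacy:
  fixes S T :: "int set" and h :: int and s1 s2 :: "int list"
  assumes hpos: "0 < h"
    and a1: "set s1 \<subseteq> S \<union> T" and a2: "set s2 \<subseteq> S \<union> T"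
    and b1: "filter (\<lambda>x. x \<in> T) s1 = map (\<lambda>x. x + h) (filter (\<lambda>x. x \<in> S) s1)"
    and b2: "filter (\<lambda>x. x \<in> T) s2 = map (\<lambda>x. x + h) (filter (\<lambda>x. x \<in> S) s2)"
    and c: "map (\<lambda>x. x \<in> S) s1 = map (\<lambda>x. x \<in> S) s2"
    and d: "\<forall>i < length (filter (\<lambda>x. x \<in> S) s1).
      (filter (\<lambda>x. x \<in> S) s1 ! i \<in> S - T \<longrightarrow> filter (\<lambda>x. x \<in> S) s2 ! i = filter (\<lambda>x. x \<in> S) s1 ! i) \<and>
      (filter (\<lambda>x. x \<in> S) s2 ! i \<in> S - T \<longrightarrow> filter (\<lambda>x. x \<in> S) s1 ! i = filter (\<lambda>x. x \<in> S) s2 ! i)"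
  shows "s1 = s2"
proof -
  define PS where "PS = (\<lambda>x::int. x \<in> S)"
  define PT where "PT = (\<lambda>x::int. x \<in> T)"
  define r1 where "r1 = filter PS s1"
  define r2 where "r2 = filter PS s2"
  have len: "length s1 = length s2" using c by (metis length_map)
  have cS: "\<And>q. q < length s1 \<Longrightarrow> (s1!q \<in> S) = (s2!q \<in> S)"
    using c len by (metis nth_map)
  have cnt: "\<And>p. length (filter PS (take p s1)) = length (filter PS (take p s2))"
    using c count_take_eq unfolding PS_def by metis
  have Seq: "s1!q = s2!q" if q: "q < length s1" "s1!q \<in> S" "s1!q \<in> S - T \<or> s2!q \<in> S - T" for q
  proof -
    have q2: "q < length s2" "PS (s2!q)" using q len cS unfolding PS_def by auto
    have f1: "r1 ! length (filter PS (take q s1)) = s1!q" "length (filter PS (take q s1)) < length r1"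
      using filter_take_nth[of q s1 PS] q unfolding r1_def PS_def by auto
    have f2: "r2 ! length (filter PS (take q s1)) = s2!q"
      using filter_take_nth[of q s2 PS] q2 cnt unfolding r2_def by auto
    show ?thesis using d f1 f2 q(3) unfolding r1_def r2_def PS_def by metis
  qed
  have Teq: "(s1!q \<in> T) = (s2!q \<in> T)" if q: "q < length s1" for q
  proof (cases "s1!q \<in> S")
    case True
    then have "s2!q \<in> S" using cS q by auto
    show ?thesis
    proof (cases "s1!q \<in> S - T \<or> s2!q \<in> S - T")
      case True2: True
      then show ?thesis using Seq[OF q True True2] by simp
    next
      case False then show ?thesis using True \<open>s2!q \<in> S\<close> by auto
    qed
  next
    case False
    then have "s2!q \<notin> S" using cS q by auto
    moreover have "s1!q \<in> set s1" "s2!q \<in> set s2" using q len by auto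
    ultimately show ?thesis using False a1 a2 by auto
  qed
  have mapT: "map PT s1 = map PT s2"
    using Teq len unfolding PT_def by (intro nth_equalityI) auto
  have cntT: "\<And>p. length (filter PT (take p s1)) = length (filter PT (take p s2))"
    using mapT count_take_eq by metis
  have main: "s1!p = s2!p" if "p < length s1" for p
    using that
  proof (induction p rule: measure_induct_rule[where f = "\<lambda>p. card {x\<in>set s1. x < s1!p}"])
    case (less p)
    have p2: "p < length s2" using less.prems len by simp
    show ?case
    proof (cases "s1!p \<in> S - T \<or> s2!p \<in> S - T")
      case True
      then have "s1!p \<in> S" using cS less.prems by auto
      then show ?thesis using Seq less.prems True by auto
    next
      case False
      have inT1: "s1!p \<in> T"
      proof (cases "s1!p \<in> S")
        case True then show ?thesis using False by auto
      next
        case False then show ?thesis using a1 less.prems by (meson UnE nth_mem subsetD)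
      qed
      then have inT2: "s2!p \<in> T" using Teq less.prems by auto
      define j where "j = length (filter PT (take p s1))"
      have g1: "filter PT s1 ! j = s1!p" "j < length (filter PT s1)"
        using filter_take_nth[of p s1 PT] less.prems inT1 unfolding j_def PT_def by auto
      have g2: "filter PT s2 ! j = s2!p"
        using filter_take_nth[of p s2 PT] p2 inT2 cntT unfolding j_def PT_def by auto
      have jr: "j < length r1" using g1(2) b1 unfolding r1_def PS_def PT_def by simp
      have e1: "s1!p = r1!j + h" using g1 jr b1 unfolding r1_def PS_def PT_def by simp
      have jr2: "j < length r2" using jr cnt[of "length s1"] len unfolding r1_def r2_def by simp
      have e2: "s2!p = r2!j + h" using g2 jr2 b2 unfolding r2_def PS_def PT_def by simp
      obtain q where q: "q < length s1" "PS (s1!q)" "length (filter PS (take q s1)) = j"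
        using filter_nth_ex[OF jr[unfolded r1_def]] by blast
      have q2: "q < length s2" "PS (s2!q)" using q len cS unfolding PS_def by auto
      have h1: "r1!j = s1!q" using filter_take_nth[of q s1 PS] q unfolding r1_def by auto
      have h2: "r2!j = s2!q" using filter_take_nth[of q s2 PS] q2 q(3) cnt unfolding r2_def by auto
      have lt: "s1!q < s1!p" using e1 h1 hpos by simp
      have "{x\<in>set s1. x < s1!q} \<subset> {x\<in>set s1. x < s1!p}"
      proof (rule psubsetI)
        show "{x\<in>set s1. x < s1!q} \<subseteq> {x\<in>set s1. x < s1!p}" using lt by auto
        have "s1!q \<in> {x\<in>set s1. x < s1!p}" using lt q(1) by simp
        moreover have "s1!q \<notin> {x\<in>set s1. x < s1!q}" by simp
        ultimately show "{x\<in>set s1. x < s1!q} \<noteq> {x\<in>set s1. x < s1!p}" by blast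
      qed
      then have "card {x\<in>set s1. x < s1!q} < card {x\<in>set s1. x < s1!p}"
        by (intro psubset_card_mono) auto
      then have "s1!q = s2!q" using less.IH q(1) by blast
      then show ?thesis using e1 e2 h1 h2 by simp
    qed
  qed
  show ?thesis using main len by (intro nth_equalityI) auto
qed

definition pos :: "int list \<Rightarrow> int \<Rightarrow> nat" where
  "pos r x = (LEAST i. i < length r \<and> r!i = x)"

lemma pos_props:
  assumes "x \<in> set r"
  shows "pos r x < length r \<and> r ! pos r x = x"
proof -
  obtain i where "i < length r" "r!i = x" using assms by (auto simp: in_set_conv_nth)
  then show ?thesis unfolding pos_def by (metis (mono_tags, lifting) LeastI)
qed

lemma pos_nth:
  assumes "distinct r" "i < length r"
  shows "pos r (r!i) = i"
  using pos_props[of "r!i" r] assms nth_eq_iff_index_eq by auto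

lemma perS:
  fixes S :: "int set" and h :: int and k t :: nat
  assumes finS: "finite S" and cardS: "card S = k" and hpos: "0<h" and kpos: "0<k"
  shows "card {\<rho>. distinct \<rho> \<and> set \<rho> = S \<and> t \<le> card (S \<inter> (\<lambda>x. x+h)`S) \<and>
     (\<exists>\<pi>. distinct \<pi> \<and> subseq \<rho> \<pi> \<and> subseq (map (\<lambda>x. x+h) \<rho>) \<pi>)} \<le> 2^(2*k-t) * k^(k-t)"
    (is "card ?G \<le> _")
proof (cases "?G = {}")
  case True then show ?thesis by (metis card.empty zero_le)
next
  case False
  define T where "T = (\<lambda>x. x+h)`S"
  define I where "I = card (S \<inter> T)"
  define H where "H = S - T"
  define hs where "hs = sorted_list_of_set H"
  have tI: "t \<le> I" using False unfolding I_def T_def by auto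
  have finT: "finite T" using finS unfolding T_def by simp
  have cardT: "card T = k" unfolding T_def using cardS by (simp add: card_image inj_on_def)
  have IS: "I \<le> k" unfolding I_def using cardS finS by (metis card_mono inf_le1)
  have cardU: "card (S \<union> T) = 2*k - I"
    using card_Un_Int[OF finS finT] cardS cardT unfolding I_def by simp
  have cardH: "card H = k - I" unfolding H_def I_def
    using card_Diff_subset_Int[of S T] finS cardS by simp
  have finH: "finite H" unfolding H_def using finS by simp
  have seths: "set hs = H" unfolding hs_def using finH by simp
  define props where "props = (\<lambda>\<sigma> \<rho>. set \<sigma> = S \<union> T \<and> distinct \<sigma> \<and>
      filter (\<lambda>x. x \<in> S) \<sigma> = \<rho> \<and> filter (\<lambda>x. x \<in> T) \<sigma> = map (\<lambda>x. x+h) \<rho>)"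
  have exs: "\<exists>\<sigma>. props \<sigma> \<rho>" if "\<rho> \<in> ?G" for \<rho>
  proof -
    from that obtain \<pi> where \<pi>: "distinct \<pi>" "subseq \<rho> \<pi>" "subseq (map (\<lambda>x. x+h) \<rho>) \<pi>"
      and r: "distinct \<rho>" "set \<rho> = S" by blast
    have sT: "set (map (\<lambda>x. x+h) \<rho>) = T" using r unfolding T_def by simp
    have dT: "distinct (map (\<lambda>x. x+h) \<rho>)" using r by (simp add: distinct_map inj_on_def)
    define \<sigma> where "\<sigma> = filter (\<lambda>x. x \<in> S \<union> T) \<pi>"
    have f1: "filter (\<lambda>x. x \<in> S) \<pi> = \<rho>" using filter_subseq_distinct[OF \<pi>(2) \<pi>(1)] r by simp
    have f2: "filter (\<lambda>x. x \<in> T) \<pi> = map (\<lambda>x. x+h) \<rho>"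
      using filter_subseq_distinct[OF \<pi>(3) \<pi>(1)] sT by simp
    have "set \<rho> \<subseteq> set \<pi>" "set (map (\<lambda>x. x+h) \<rho>) \<subseteq> set \<pi>"
      using \<pi> subseq_set_sub by blast+
    then have "set \<sigma> = S \<union> T" unfolding \<sigma>_def using r sT by auto
    moreover have "filter (\<lambda>x. x \<in> S) \<sigma> = \<rho>" unfolding \<sigma>_def using f1
      by (simp add: filter_filter) (metis (no_types, lifting) UnI1 filter_cong)
    moreover have "filter (\<lambda>x. x \<in> T) \<sigma> = map (\<lambda>x. x+h) \<rho>" unfolding \<sigma>_def using f2
      by (simp add: filter_filter) (metis (no_types, lifting) UnI2 filter_cong)
    moreover have "distinct \<sigma>" unfolding \<sigma>_def using \<pi>(1) by simp
    ultimately show ?thesis unfolding props_def by blast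
  qed
  define sg where "sg = (\<lambda>\<rho>. SOME \<sigma>. props \<sigma> \<rho>)"
  have sgp: "props (sg \<rho>) \<rho>" if "\<rho> \<in> ?G" for \<rho>
    unfolding sg_def using exs[OF that] by (rule someI_ex)
  define F where "F = (\<lambda>\<rho>. (map (\<lambda>x. x \<in> S) (sg \<rho>), map (pos \<rho>) hs))"
  have inj: "inj_on F ?G"
  proof (rule inj_onI)
    fix r1 r2 assume r1: "r1 \<in> ?G" and r2: "r2 \<in> ?G" and eq: "F r1 = F r2"
    have p1: "props (sg r1) r1" and p2: "props (sg r2) r2" using sgp r1 r2 by auto
    have d1: "distinct r1" "set r1 = S" using r1 by auto
    have d2: "distinct r2" "set r2 = S" using r2 by auto
    have c: "map (\<lambda>x. x \<in> S) (sg r1) = map (\<lambda>x. x \<in> S) (sg r2)" using eq unfolding F_def by simp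
    have hp: "\<forall>x\<in>H. pos r1 x = pos r2 x" using eq seths unfolding F_def by (simp add: map_eq_conv)
    have len: "length r1 = length r2" using d1 d2 by (metis distinct_card)
    have dd: "\<And>i r r'. distinct r \<Longrightarrow> set r = S \<Longrightarrow> set r' = S \<Longrightarrow> i < length r \<Longrightarrow> r!i \<in> S - T
       \<Longrightarrow> (\<forall>x\<in>H. pos r x = pos r' x) \<Longrightarrow> r'!i = r!i"
    proof -
      fix i r r' assume a: "distinct r" "set r = S" "set r' = S" "i < length r" "r!i \<in> S - T"
        "\<forall>x\<in>H. pos r x = pos r' x"
      then have "pos r' (r!i) = i" using pos_nth[of r i] unfolding H_def by auto
      then show "r'!i = r!i" using pos_props[of "r!i" r'] a by (metis nth_mem)
    qed
    have "sg r1 = sg r2"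
    proof (rule determinacy[OF hpos, of "sg r1" S T "sg r2"])
      show "set (sg r1) \<subseteq> S \<union> T" "set (sg r2) \<subseteq> S \<union> T" using p1 p2 unfolding props_def by auto
      show "filter (\<lambda>x. x \<in> T) (sg r1) = map (\<lambda>x. x + h) (filter (\<lambda>x. x \<in> S) (sg r1))"
        "filter (\<lambda>x. x \<in> T) (sg r2) = map (\<lambda>x. x + h) (filter (\<lambda>x. x \<in> S) (sg r2))"
        using p1 p2 unfolding props_def by auto
      show "map (\<lambda>x. x \<in> S) (sg r1) = map (\<lambda>x. x \<in> S) (sg r2)" by (rule c)
      have f1: "filter (\<lambda>x. x \<in> S) (sg r1) = r1" and f2: "filter (\<lambda>x. x \<in> S) (sg r2) = r2"
        using p1 p2 unfolding props_def by auto
      show "\<forall>i < length (filter (\<lambda>x. x \<in> S) (sg r1)).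
        (filter (\<lambda>x. x \<in> S) (sg r1) ! i \<in> S - T \<longrightarrow> filter (\<lambda>x. x \<in> S) (sg r2) ! i = filter (\<lambda>x. x \<in> S) (sg r1) ! i) \<and>
        (filter (\<lambda>x. x \<in> S) (sg r2) ! i \<in> S - T \<longrightarrow> filter (\<lambda>x. x \<in> S) (sg r1) ! i = filter (\<lambda>x. x \<in> S) (sg r2) ! i)"
        unfolding f1 f2
      proof (intro allI impI conjI)
        fix i assume i: "i < length r1"
        have hp': "\<forall>x\<in>H. pos r2 x = pos r1 x" using hp by simp
        have i': "i < length r2" using i len by simp
        show "r2 ! i = r1 ! i" if "r1 ! i \<in> S - T" using dd[OF d1(1) d1(2) d2(2) i that hp] .
        show "r1 ! i = r2 ! i" if "r2 ! i \<in> S - T" using dd[OF d2(1) d2(2) d1(2) i' that hp'] .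
      qed
    qed
    moreover have "filter (\<lambda>x. x \<in> S) (sg r1) = r1" "filter (\<lambda>x. x \<in> S) (sg r2) = r2"
      using p1 p2 unfolding props_def by blast+
    ultimately show "r1 = r2" by metis
  qed
  have img: "F ` ?G \<subseteq> {bs. set bs \<subseteq> (UNIV::bool set) \<and> length bs = 2*k - I} \<times>
       {xs. set xs \<subseteq> {0..<k} \<and> length xs = k - I}"
  proof
    fix y assume "y \<in> F ` ?G"
    then obtain \<rho> where r: "\<rho> \<in> ?G" and y: "y = F \<rho>" by blast
    have p: "props (sg \<rho>) \<rho>" using sgp r by auto
    have "length (sg \<rho>) = 2*k - I" using p cardU unfolding props_def by (metis distinct_card)
    moreover have "set (map (pos \<rho>) hs) \<subseteq> {0..<k}"
    proof
      fix z assume "z \<in> set (map (pos \<rho>) hs)"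
      then obtain x where "x \<in> H" "z = pos \<rho> x" using seths by auto
      moreover have "length \<rho> = k" using r cardS by (metis (mono_tags, lifting) distinct_card mem_Collect_eq)
      ultimately show "z \<in> {0..<k}" using pos_props[of x \<rho>] r unfolding H_def by auto
    qed
    moreover have "length (map (pos \<rho>) hs) = k - I" using seths cardH hs_def by simp
    ultimately show "y \<in> {bs. set bs \<subseteq> (UNIV::bool set) \<and> length bs = 2*k - I} \<times>
       {xs. set xs \<subseteq> {0..<k} \<and> length xs = k - I}" unfolding y F_def by simp
  qed
  have "card ?G \<le> card ({bs. set bs \<subseteq> (UNIV::bool set) \<and> length bs = 2*k - I} \<times>
       {xs. set xs \<subseteq> {0..<k} \<and> length xs = k - I})"
    by (rule card_inj_on_le[OF inj img]) (intro finite_cartesian_product finite_lists_length_eq; simp)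
  also have "\<dots> = 2^(2*k-I) * k^(k-I)"
    by (simp only: card_cartesian_product card_lists_length_eq[OF finite_UNIV]
          card_lists_length_eq[OF finite_atLeastLessThan]) simp
  also have "\<dots> \<le> 2^(2*k-t) * k^(k-t)"
    using tI IS kpos by (intro mult_mono power_increasing) auto
  finally show ?thesis .
qed

theorem lemma3p5:
  fixes n k t :: nat and h :: int
  assumes "0 < n" and "0 < k" and "k \<le> n" and "0 < h"
  shows "real (card {\<rho> \<in> patterns n k.
            card (set \<rho> \<inter> set (shift \<rho> h)) \<ge> t \<and>
            (\<exists>\<pi> \<in> perms n. exact_pattern \<rho> \<pi> \<and> exact_pattern (shift \<rho> h) \<pi>)})
         / real (card (patterns n k))
     \<le> (2::real) powi (2 * int k - int t) * (real k) powi (int k - int t) / fact k"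
proof -
  let ?G = "{\<rho> \<in> patterns n k.
            card (set \<rho> \<inter> set (shift \<rho> h)) \<ge> t \<and>
            (\<exists>\<pi> \<in> perms n. exact_pattern \<rho> \<pi> \<and> exact_pattern (shift \<rho> h) \<pi>)}"
  let ?P = "patterns n k"
  define B where "B = (2::nat)^(2*k-t) * k^(k-t)"
  define Ss where "Ss = {S. S \<subseteq> {1..int n} \<and> card S = k}"
  define A where "A = (\<lambda>S. {\<rho>\<in>?P. set \<rho> = S})"
  define GS where "GS = (\<lambda>S. {\<rho>\<in>?G. set \<rho> = S})"
  have finSs: "finite Ss" unfolding Ss_def by (rule finite_subset[of _ "Pow {1..int n}"]) auto
  have finP: "finite ?P" unfolding patterns_def
    by (rule finite_subset[OF _ finite_lists_length_eq[of "{1..int n}" k]]) auto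
  have Pu: "?P = \<Union>(A ` Ss)"
    unfolding A_def Ss_def patterns_def by (auto simp: distinct_card)
  have Gu: "?G = \<Union>(GS ` Ss)"
    unfolding GS_def Ss_def patterns_def by (auto simp: distinct_card)
  have cP: "card ?P = card Ss * fact k"
  proof -
    have fA: "\<forall>S\<in>Ss. finite (A S)"
    proof
      fix S assume "S \<in> Ss"
      show "finite (A S)" by (rule finite_subset[OF _ finP]) (simp add: A_def)
    qed
    have dA: "\<forall>i\<in>Ss. \<forall>j\<in>Ss. i \<noteq> j \<longrightarrow> A i \<inter> A j = {}"
      unfolding A_def by blast
    have "card ?P = (\<Sum>S\<in>Ss. card (A S))" unfolding Pu
      by (rule card_UN_disjoint[OF finSs fA dA])
    also have "\<dots> = (\<Sum>S\<in>Ss. fact k)"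
    proof (rule sum.cong[OF refl])
      fix S assume S: "S \<in> Ss"
      then have fS: "finite S" "card S = k" unfolding Ss_def by (auto intro: finite_subset)
      have "A S = permutations_of_set S"
      proof (rule set_eqI)
        fix r
        show "r \<in> A S \<longleftrightarrow> r \<in> permutations_of_set S"
        proof
          assume "r \<in> A S" then show "r \<in> permutations_of_set S"
            unfolding A_def permutations_of_set_def patterns_def by simp
        next
          assume r: "r \<in> permutations_of_set S"
          then have "distinct r" "set r = S" unfolding permutations_of_set_def by auto
          moreover have "length r = k" using calculation fS by (metis distinct_card)
          moreover have "S \<subseteq> {1..int n}" using S unfolding Ss_def by simp
          ultimately show "r \<in> A S" unfolding A_def patterns_def by simp
        qed
      qed
      then show "card (A S) = fact k" using fS by simp
    qed
    finally show ?thesis by simp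
  qed
  have cG: "card ?G \<le> card Ss * B"
  proof -
    have fG: "\<forall>S\<in>Ss. finite (GS S)"
    proof
      fix S assume "S \<in> Ss"
      have "GS S \<subseteq> ?P" unfolding GS_def by blast
      then show "finite (GS S)" by (rule finite_subset[OF _ finP])
    qed
    have dG: "\<forall>i\<in>Ss. \<forall>j\<in>Ss. i \<noteq> j \<longrightarrow> GS i \<inter> GS j = {}"
      unfolding GS_def by blast
    have "card ?G = (\<Sum>S\<in>Ss. card (GS S))" unfolding Gu
      by (rule card_UN_disjoint[OF finSs fG dG])
    also have "\<dots> \<le> (\<Sum>S\<in>Ss. B)"
    proof (rule sum_mono)
      fix S assume S: "S \<in> Ss"
      then have fS: "finite S" "card S = k" unfolding Ss_def by (auto intro: finite_subset)
      have "GS S \<subseteq> {\<rho>. distinct \<rho> \<and> set \<rho> = S \<and> t \<le> card (S \<inter> (\<lambda>x. x+h)`S) \<and>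
         (\<exists>\<pi>. distinct \<pi> \<and> subseq \<rho> \<pi> \<and> subseq (map (\<lambda>x. x+h) \<rho>) \<pi>)}"
        unfolding GS_def patterns_def perms_def exact_pattern_def shift_def by auto
      then have "card (GS S) \<le> card {\<rho>. distinct \<rho> \<and> set \<rho> = S \<and> t \<le> card (S \<inter> (\<lambda>x. x+h)`S) \<and>
         (\<exists>\<pi>. distinct \<pi> \<and> subseq \<rho> \<pi> \<and> subseq (map (\<lambda>x. x+h) \<rho>) \<pi>)}"
      proof (rule card_mono[rotated])
        show "finite {\<rho>. distinct \<rho> \<and> set \<rho> = S \<and> t \<le> card (S \<inter> (\<lambda>x. x+h)`S) \<and>
         (\<exists>\<pi>. distinct \<pi> \<and> subseq \<rho> \<pi> \<and> subseq (map (\<lambda>x. x+h) \<rho>) \<pi>)}"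
          by (rule finite_subset[OF _ finite_lists_length_eq[OF fS(1), of k]])
             (use fS in \<open>auto simp: distinct_card\<close>)
      qed
      also have "\<dots> \<le> B" unfolding B_def using perS[OF fS assms(4) assms(2)] by simp
      finally show "card (GS S) \<le> B" .
    qed
    finally show ?thesis by simp
  qed
  show ?thesis
  proof (cases "t \<le> k")
    case False
    have "?G = {}"
    proof (rule ccontr)
      assume "?G \<noteq> {}"
      then obtain \<rho> where r: "\<rho> \<in> ?G" by blast
      then have "card (set \<rho> \<inter> set (shift \<rho> h)) \<le> k"
        unfolding patterns_def by (metis (mono_tags, lifting) card_length card_mono
            finite_set inf_le1 mem_Collect_eq order_trans)
      then show False using r False by auto
    qed
    then have c0: "card ?G = 0" by (simp only: card.empty)
    then have "real (card ?G) / real (card ?P) = 0" by (simp only: of_nat_0 div_0)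
    moreover have "0 \<le> (2::real) powi (2 * int k - int t) * (real k) powi (int k - int t) / fact k"
      by (intro divide_nonneg_nonneg mult_nonneg_nonneg zero_le_power_int) auto
    ultimately show ?thesis by linarith
  next
    case True
    have x1: "2 * int k - int t = int (2*k-t)" using True by simp
    have x2: "int k - int t = int (k-t)" using True by simp
    have e1: "(2::real) powi (2 * int k - int t) = 2^(2*k-t)"
      by (simp only: x1 power_int_of_nat)
    have e2: "(real k) powi (int k - int t) = real k^(k-t)"
      by (simp only: x2 power_int_of_nat)
    have rhs: "(2::real) powi (2 * int k - int t) * (real k) powi (int k - int t) / fact k = real B / fact k"
      unfolding e1 e2 B_def by simp
    define cg where "cg = card ?G"
    define cp where "cp = card ?P"
    have cG2: "cg \<le> card Ss * B" using cG unfolding cg_def .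
    have cP2: "cp = card Ss * fact k" using cP unfolding cp_def .
    have "real cg / real cp \<le> real B / fact k"
    proof (cases "card Ss = 0")
      case True
      then have "cp = 0" using cP2 by simp
      then show ?thesis by simp
    next
      case False
      have cG': "real cg \<le> real (card Ss) * real B"
        using cG2 by (metis of_nat_le_iff of_nat_mult)
      have cP': "real cp = real (card Ss) * fact k" using cP2 by simp
      have pos1: "0 < real (card Ss)" using False by simp
      have pos2: "(0::real) < fact k" by simp
      have "real cg / real cp \<le> (real (card Ss) * real B) / (real (card Ss) * fact k)"
        unfolding cP' using cG' pos1 pos2 by (intro divide_right_mono) auto
      also have "\<dots> = real B / fact k" using pos1 by simp
      finally show ?thesis .
    qed
    then show ?thesis unfolding rhs cg_def cp_def .
  qed
qed

end
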